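(* Assume (A1) with $\Omega\supseteq B(x^*,\delta)$, (A2), (A3), (A4) with exponent $r\in(0,1]$, and $\operatorname{rank}J(x)=\operatorname{rank}J(x^* )\ge1$ for all $x\in B(x^*,\delta)$. Let $\{x_k\}$ be generated by LMMSS with $\alpha_k=1$ and $\lambda_k=\|J_k^TF_k\|$ for all $k$. Then there exists $\varepsilon>0$ such that, if $x_0\in B(x^*,\varepsilon)$, the sequence $\{\operatorname{dist}(x_k,X^* )\}$ converges to zero superlinearly (more precisely $\operatorname{dist}(x_{k+1},X^* )\le K\operatorname{dist}(x_k,X^* )^{1+r}$ for a constant $K$, hence quadratically when $r=1$), and $\{x_k\}$ converges to a point of $X^*\cap B(x^*,\delta/2)$.
   Context: Let $F:\mathbb{R}^n\to\mathbb{R}^m$ be twice continuously differentiable with $m\ge n$, $J(x)$ its Jacobian, $\phi(x)=\tfrac12\|F(x)\|^2$, $\nabla\phi(x)=J(x)^TF(x)$. Norms are Euclidean/spectral. $X^*=\{x: J(x)^TF(x)=0\}\neq\emptyset$; $\operatorname{dist}(x,X^* )=\inf_{z\in X^*}\|x-z\|$. Fix $x^*\in X^*$; $B(x^*,\delta)$ is the closed ball. $L\in\mathbb{R}^{p\times n}$ has rank $p\le n$. LMMSS iteration: given $x_k$ and $\lambda_k>0$, with $F_k=F(x_k)$, $J_k=J(x_k)$, let $d_k$ solve $(J_k^TJ_k+\lambda_kL^TL)d_k=-J_k^TF_k$ and $x_{k+1}=x_k+\alpha_kd_k$. (A1) there are $\Omega$ and $\gamma>0$ with $\|J(x)v\|^2+\|Lv\|^2\ge\gamma\|v\|^2$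 for $x\in\Omega$, all $v$. (A2) $\delta\in(0,1)$, $L_0>0$ with $\|J(x)-J(y)\|\le L_0\|x-y\|$ on $B(x^*,\delta)$. (A3) $\omega>0$ with $\omega\operatorname{dist}(x,X^* )\le\|J(x)^TF(x)\|$ on $B(x^*,\delta)$. (A4) $r\in(0,1]$, $C\ge0$ with $\|(J(x)-J(z))^TF(z)\|\le C\|x-z\|^{1+r}$ for $x\in B(x^*,\delta)$, $z\in X^*\cap B(x^*,\delta)$. *)

theory Defs
  imports "HOL-Analysis.Analysis"
begin

definition specnorm :: "real^'n^'m \<Rightarrow> real" where
  "specnorm A = onorm (\<lambda>v. A *v v)"

definition Xstar :: "(real^'n \<Rightarrow> real^'m) \<Rightarrow> (real^'n \<Rightarrow> real^'n^'m) \<Rightarrow> (real^'n) set" where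
  "Xstar F J = {x. transpose (J x) *v F x = 0}"

text \<open>If lambda = 0 (i.e. x already
  stationary, so the method has terminated) the iterate stays put (d = 0).\<close>
definition lmmss_step ::
  "(real^'n \<Rightarrow> real^'m) \<Rightarrow> (real^'n \<Rightarrow> real^'n^'m) \<Rightarrow> real^'n^'p \<Rightarrow> real \<Rightarrow>
   real^'n \<Rightarrow> real^'n \<Rightarrow> real^'n \<Rightarrow> bool" where
  "lmmss_step F J L lam x d x' \<longleftrightarrow>
     (transpose (J x) ** J x + lam *\<^sub>R (transpose L ** L)) *v d = - (transpose (J x) *v F x)
     \<and> (lam = 0 \<longrightarrow> d = 0)
     \<and> x' = x + d"

end

theory Submission
  imports Defs
begin

lemma inner_transpose: "(transpose A *v x) \<bullet> (y::real^'n) = x \<bullet> ((A::real^'n^'m) *v y)"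
  by (simp add: dot_lmul_matrix)

lemma transpose_minus: "transpose (A - B) = transpose A - transpose (B::real^'n^'m)"
  by (simp add: transpose_def vec_eq_iff)

lemma specnorm_bound: "norm ((A::real^'n^'m) *v v) \<le> specnorm A * norm v"
  unfolding specnorm_def by (rule onorm) simp

lemma specnorm_transpose_bound: "norm (transpose (A::real^'n^'m) *v w) \<le> specnorm A * norm w"
proof -
  define u where "u = transpose A *v w"
  have "norm u ^ 2 = w \<bullet> (A *v u)"
    unfolding u_def power2_norm_eq_inner by (rule inner_transpose)
  also have "\<dots> \<le> norm w * norm (A *v u)" by (rule norm_cauchy_schwarz)
  also have "\<dots> \<le> norm w * (specnorm A * norm u)"
    by (simp add: mult_left_mono specnorm_bound)
  finally have *: "norm u * norm u \<le> (specnorm A * norm w) * norm u"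
    by (simp add: power2_eq_square algebra_simps)
  show ?thesis
  proof (cases "norm u = 0")
    case True
    have "0 \<le> specnorm A"
      unfolding specnorm_def by (rule onorm_pos_le) simp
    then show ?thesis using True by (simp add: u_def)
  next
    case False
    then have "norm u > 0" by simp
    with * show ?thesis by (simp add: u_def)
  qed
qed
lemma rank_part:
  fixes J :: "real^'n \<Rightarrow> real^'n^'m"
  assumes L0: "L0 > 0" and dpos: "\<delta> > 0"
    and lip: "\<And>x. x \<in> cball xs \<delta> \<Longrightarrow> specnorm (J x - J xs) \<le> L0 * norm (x - xs)"
    and rk: "\<And>x. x \<in> cball xs \<delta> \<Longrightarrow> rank (J x) = rank (J xs)"
  shows "\<exists>\<rho>>0. \<rho> \<le> \<delta> \<and> (\<exists>\<sigma>>0. \<forall>x\<in>cball xs \<rho>. \<forall>a.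
           \<sigma> * norm (transpose (J x) *v a) \<le> norm (J x *v (transpose (J x) *v a)))"
proof -
  define W where "W = range ((*v) (J xs))"
  have subW: "subspace W" unfolding W_def
    by (simp add: subspace_UNIV linear_subspace_image)
  have clW: "closed W" using subW closed_subspace by blast
  have injW: "\<forall>w\<in>W. transpose (J xs) *v w = 0 \<longrightarrow> w = 0"
  proof (intro ballI impI)
    fix w assume "w \<in> W" and h: "transpose (J xs) *v w = 0"
    then obtain a where a: "w = J xs *v a" unfolding W_def by auto
    have "(transpose (J xs) *v w) \<bullet> a = w \<bullet> w" using inner_transpose a by metis
    with h show "w = 0" by simp
  qed
  obtain c0 where c0: "c0 > 0" "\<forall>w\<in>W. norm (transpose (J xs) *v w) \<ge> c0 * norm w"
    using injective_imp_isometric[OF clW subW matrix_vector_mul_bounded_linear injW] by blast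
  define \<rho> where "\<rho> = min \<delta> (c0 / (2 * L0))"
  define \<sigma> where "\<sigma> = c0 / 2"
  have rpos: "\<rho> > 0" using dpos c0 L0 by (simp add: \<rho>_def)
  have spos: "\<sigma> > 0" using c0 by (simp add: \<sigma>_def)
  have main: "\<sigma> * norm (transpose (J x) *v a) \<le> norm (J x *v (transpose (J x) *v a))"
    if x: "x \<in> cball xs \<rho>" for x a
  proof -
    let ?f = "(*v) (transpose (J x))"
    have xd: "x \<in> cball xs \<delta>" using x by (simp add: \<rho>_def)
    have dx: "norm (x - xs) \<le> c0 / (2 * L0)" using x by (simp add: \<rho>_def dist_norm norm_minus_commute)
    have bnd: "\<sigma> * norm w \<le> norm (?f w)" if "w \<in> W" for w
    proof -
      have "norm (transpose (J x - J xs) *v w) \<le> specnorm (J x - J xs) * norm w"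
        by (rule specnorm_transpose_bound)
      also have "\<dots> \<le> L0 * norm (x - xs) * norm w"
        using lip[OF xd] by (simp add: mult_right_mono)
      also have "\<dots> \<le> L0 * (c0 / (2 * L0)) * norm w"
        using mult_left_mono[OF dx, of L0] L0 by (intro mult_right_mono) auto
      also have "\<dots> = \<sigma> * norm w" using L0 by (simp add: \<sigma>_def)
      finally have e: "norm (transpose (J x - J xs) *v w) \<le> \<sigma> * norm w" .
      have "transpose (J xs) *v w = ?f w - transpose (J x - J xs) *v w"
        by (simp add: transpose_minus matrix_vector_mult_diff_rdistrib)
      then have "norm (transpose (J xs) *v w) \<le> norm (?f w) + norm (transpose (J x - J xs) *v w)"
        by (metis norm_triangle_ineq4)
      moreover have "c0 * norm w \<le> norm (transpose (J xs) *v w)" using c0(2) that by blast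
      ultimately show ?thesis using e unfolding \<sigma>_def by linarith
    qed
    have inj: "inj_on ?f (span W)"
    proof (rule inj_onI)
      fix u v assume u: "u \<in> span W" and v: "v \<in> span W" and eq: "?f u = ?f v"
      have "u - v \<in> W" using u v subW by (metis span_eq_iff subspace_diff)
      moreover have "?f (u - v) = 0" using eq by (simp add: matrix_vector_mult_diff_distrib)
      ultimately have "\<sigma> * norm (u - v) \<le> 0" using bnd by fastforce
      with spos show "u = v" by (simp add: mult_le_0_iff)
    qed
    have "dim (?f ` W) = dim W" by (rule dim_image_eq[OF _ inj]) simp
    also have "\<dots> = rank (J xs)" by (simp add: W_def rank_dim_range)
    also have "\<dots> = rank (transpose (J x))" using rk[OF xd] by (simp add: rank_transpose)
    also have "\<dots> = dim (range ?f)" by (simp add: rank_dim_range)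
    finally have dimeq: "dim (?f ` W) = dim (range ?f)" .
    have eqW: "?f ` W = range ?f"
    proof (rule subspace_dim_equal)
      show "subspace (?f ` W)" by (rule linear_subspace_image[OF matrix_vector_mul_linear subW])
      show "subspace (range ?f)" by (rule linear_subspace_image[OF matrix_vector_mul_linear subspace_UNIV])
    qed (use dimeq in auto)
    obtain w where w: "w \<in> W" "?f a = ?f w" using eqW by (metis rangeI imageE)
    define u where "u = ?f w"
    have "norm u ^ 2 = w \<bullet> (J x *v u)"
      unfolding u_def power2_norm_eq_inner by (rule inner_transpose)
    also have "\<dots> \<le> norm w * norm (J x *v u)" by (rule norm_cauchy_schwarz)
    finally have 1: "norm u ^ 2 \<le> norm w * norm (J x *v u)" .
    have 2: "\<sigma> * norm w \<le> norm u" using bnd[OF w(1)] by (simp add: u_def)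
    have "\<sigma> * norm u \<le> norm (J x *v u)"
    proof (cases "u = 0")
      case True then show ?thesis by simp
    next
      case False
      then have nu: "norm u > 0" by simp
      have "\<sigma> * norm u * norm u = norm u * (\<sigma> * norm u)" by simp
      have "\<sigma> * norm u ^ 2 \<le> \<sigma> * norm w * norm (J x *v u)"
        using 1 spos by (simp add: mult_left_mono)
      also have "\<dots> \<le> norm u * norm (J x *v u)"
        using 2 by (simp add: mult_right_mono)
      finally have "(\<sigma> * norm u) * norm u \<le> norm (J x *v u) * norm u"
        by (simp add: power2_eq_square algebra_simps)
      with nu show ?thesis by simp
    qed
    then show ?thesis using w by (simp add: u_def)
  qed
  have "\<rho> \<le> \<delta>" by (simp add: \<rho>_def)
  with rpos spos main show ?thesis by blast
qed
lemma step_bound: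
  fixes Jm :: "real^'n^'m" and L :: "real^'n^'p" and f :: "real^'m" and d :: "real^'n"
  assumes lam: "lam > 0" and gam: "\<gamma> > 0" and cL: "\<And>v. norm (L *v v) \<le> cL * norm v"
    and A1: "\<And>v. \<gamma> * norm v ^ 2 \<le> norm (Jm *v v) ^ 2 + norm (L *v v) ^ 2"
    and sig: "\<sigma> > 0" "\<And>a. \<sigma> * norm (transpose Jm *v a) \<le> norm (Jm *v (transpose Jm *v a))"
    and eq: "(transpose Jm ** Jm + lam *\<^sub>R (transpose L ** L)) *v d = - (transpose Jm *v f)"
  shows "norm d \<le> (2 + cL^2/\<gamma>) / \<sigma>^2 * norm (transpose Jm *v f)"
proof -
  define e where "e = - (transpose Jm *v f)"
  have eq': "transpose Jm *v (Jm *v d) + lam *\<^sub>R (transpose L *v (L *v d)) = e"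
    using eq unfolding e_def
    by (simp only: matrix_vector_mult_add_rdistrib scaleR_matrix_vector_assoc matrix_vector_mul_assoc)
  let ?S = "range ((*v) (transpose Jm))"
  have subS: "subspace ?S" by (rule linear_subspace_image[OF matrix_vector_mul_linear subspace_UNIV])
  obtain y z where yz: "y \<in> span ?S" "\<And>w. w \<in> span ?S \<Longrightarrow> orthogonal z w" "d = y + z"
    using orthogonal_subspace_decomp_exists by blast
  have yS: "y \<in> ?S" using yz(1) subS by (metis span_eq_iff)
  then obtain a where a: "y = transpose Jm *v a" by auto
  have "orthogonal z (transpose Jm *v (Jm *v z))"
    using yz(2)[OF span_base[OF rangeI]] .
  then have "(transpose Jm *v (Jm *v z)) \<bullet> z = 0" by (simp add: orthogonal_def inner_commute del: transpose_matrix_vector)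
  then have "(Jm *v z) \<bullet> (Jm *v z) = 0" by (simp only: inner_transpose)
  then have Jz: "Jm *v z = 0" by simp
  have ez: "e \<bullet> z = 0"
  proof -
    have "(transpose Jm *v f) \<bullet> z = f \<bullet> (Jm *v z)" by (rule inner_transpose)
    then show ?thesis using Jz by (simp add: e_def del: transpose_matrix_vector)
  qed
  have Jd: "Jm *v d = Jm *v y" using yz(3) Jz by (simp add: matrix_vector_right_distrib)
  have "(transpose Jm *v (Jm *v d) + lam *\<^sub>R (transpose L *v (L *v d))) \<bullet> d = e \<bullet> d"
    using eq' by simp
  moreover have "(transpose Jm *v (Jm *v d)) \<bullet> d = (Jm *v d) \<bullet> (Jm *v d)" by (rule inner_transpose)
  moreover have "(transpose L *v (L *v d)) \<bullet> d = (L *v d) \<bullet> (L *v d)" by (rule inner_transpose)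
  moreover have "e \<bullet> d = e \<bullet> y" using ez yz(3) by (simp add: inner_add_right)
  ultimately have i1: "norm (Jm *v y) ^ 2 + lam * norm (L *v d) ^ 2 = e \<bullet> y"
    by (simp add: inner_add_left power2_norm_eq_inner Jd del: transpose_matrix_vector)
  have "lam * norm (L *v d) ^ 2 \<ge> 0" using lam by simp
  with i1 have "norm (Jm *v y) ^ 2 \<le> e \<bullet> y" by linarith
  also have "\<dots> \<le> norm e * norm y" by (rule norm_cauchy_schwarz)
  finally have i1': "norm (Jm *v y) ^ 2 \<le> norm e * norm y" .
  have sy: "\<sigma> * norm y \<le> norm (Jm *v y)" using sig(2)[of a] a by simp
  have ybound: "\<sigma>^2 * norm y \<le> norm e"
  proof (cases "y = 0")
    case True then show ?thesis by simp
  next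
    case False
    then have ny: "norm y > 0" by simp
    have "(\<sigma> * norm y)^2 \<le> norm (Jm *v y) ^ 2"
      using sy sig(1) by (intro power_mono) auto
    with i1' have "(\<sigma>^2 * norm y) * norm y \<le> norm e * norm y"
      by (simp add: power2_eq_square algebra_simps)
    with ny show ?thesis by simp
  qed
  have "(transpose Jm *v (Jm *v d) + lam *\<^sub>R (transpose L *v (L *v d))) \<bullet> z = e \<bullet> z"
    using eq' by simp
  moreover have "(transpose Jm *v (Jm *v d)) \<bullet> z = (Jm *v d) \<bullet> (Jm *v z)" by (rule inner_transpose)
  moreover have "(transpose L *v (L *v d)) \<bullet> z = (L *v d) \<bullet> (L *v z)" by (rule inner_transpose)
  ultimately have "lam * ((L *v d) \<bullet> (L *v z)) = 0"
    using ez Jz by (simp add: inner_add_left del: transpose_matrix_vector)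
  with lam have "(L *v d) \<bullet> (L *v z) = 0" by simp
  then have i2: "(L *v y) \<bullet> (L *v z) + norm (L *v z) ^ 2 = 0"
    using yz(3) by (simp add: matrix_vector_right_distrib inner_add_left power2_norm_eq_inner)
  have "norm (L *v z) ^ 2 \<le> norm (L *v y) * norm (L *v z)"
    using i2 norm_cauchy_schwarz[of "- (L *v y)" "L *v z"] by (simp add: inner_minus_left)
  then have Lz: "norm (L *v z) \<le> norm (L *v y)"
    by (cases "norm (L *v z) = 0") (auto simp: power2_eq_square)
  have Ly: "norm (L *v y) \<le> cL * norm y" by (rule cL)
  have "\<gamma> * norm z ^ 2 \<le> norm (L *v z) ^ 2" using A1[of z] Jz by simp
  also have "\<dots> \<le> (cL * norm y) ^ 2" using Lz Ly by (intro power_mono) auto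
  finally have gz: "\<gamma> * norm z ^ 2 \<le> (cL * norm y) ^ 2" .
  define M where "M = 1 + cL^2/\<gamma>"
  have M1: "M \<ge> 1" using gam by (simp add: M_def)
  have "norm z ^ 2 \<le> cL^2/\<gamma> * norm y ^ 2"
    using gz gam by (simp add: field_simps power_mult_distrib)
  also have "\<dots> \<le> M * norm y ^ 2" unfolding M_def by (intro mult_right_mono) auto
  also have "\<dots> \<le> (M * norm y) ^ 2"
  proof -
    have "norm y ^ 2 \<le> M * norm y ^ 2" using mult_right_mono[OF M1, of "norm y ^ 2"] by simp
    then have "M * norm y ^ 2 \<le> M * (M * norm y ^ 2)" using M1 by (intro mult_left_mono) auto
    moreover have "(M * norm y)^2 = M * (M * norm y ^ 2)" by (simp add: power2_eq_square algebra_simps)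
    ultimately show ?thesis by linarith
  qed
  finally have h: "norm z ^ 2 \<le> (M * norm y) ^ 2" .
  have "norm z \<le> M * norm y"
    by (rule power2_le_imp_le[OF h]) (use M1 in simp)
  moreover have "norm d \<le> norm y + norm z" using yz(3) norm_triangle_ineq by metis
  moreover have "(1 + M) * norm y = norm y + M * norm y" by (simp add: distrib_right)
  ultimately have "norm d \<le> (1 + M) * norm y" by linarith
  also have "\<dots> \<le> (1 + M) * (norm e / \<sigma>^2)"
  proof (rule mult_left_mono)
    show "norm y \<le> norm e / \<sigma>^2" using ybound sig(1) by (simp add: pos_le_divide_eq mult.commute)
  qed (use M1 in auto)
  also have "\<dots> = (2 + cL^2/\<gamma>) / \<sigma>^2 * norm (transpose Jm *v f)"
  proof -
    have "norm e = norm (transpose Jm *v f)" unfolding e_def by (rule norm_minus_cancel)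
    then show ?thesis by (simp add: M_def field_simps)
  qed
  finally show ?thesis .
qed
lemma g_continuous:
  fixes F :: "real^'n \<Rightarrow> real^'m" and J :: "real^'n \<Rightarrow> real^'n^'m"
  assumes "continuous_on UNIV F" "continuous_on UNIV J"
  shows "continuous_on UNIV (\<lambda>x. transpose (J x) *v F x)"
proof -
  have eq: "(\<lambda>x. transpose (J x) *v F x) = (\<lambda>x. \<chi> i. \<Sum>j\<in>UNIV. J x $ j $ i * F x $ j)"
    by (simp add: matrix_vector_mult_def transpose_def del: transpose_matrix_vector)
  show ?thesis unfolding eq
    by (intro continuous_intros assms)
qed

lemma Xstar_closed:
  fixes F :: "real^'n \<Rightarrow> real^'m" and J :: "real^'n \<Rightarrow> real^'n^'m"
  assumes "continuous_on UNIV F" "continuous_on UNIV J"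
  shows "closed (Xstar F J)"
proof -
  have "Xstar F J = {x. transpose (J x) *v F x = 0}" by (simp add: Xstar_def del: transpose_matrix_vector)
  then show ?thesis using g_continuous[OF assms] by (simp add: closed_Collect_eq del: transpose_matrix_vector)
qed

lemma taylor_bound:
  fixes F :: "real^'n \<Rightarrow> real^'m" and J :: "real^'n \<Rightarrow> real^'n^'m"
  assumes F_deriv: "\<And>x. (F has_derivative (\<lambda>h. J x *v h)) (at x)"
    and lip: "\<And>x y. x \<in> cball xs \<delta> \<Longrightarrow> y \<in> cball xs \<delta> \<Longrightarrow> specnorm (J x - J y) \<le> L0 * norm (x - y)"
    and L0nn: "L0 \<ge> 0"
    and x: "x \<in> cball xs \<delta>" and y: "y \<in> cball xs \<delta>"
  shows "norm (F y - F x - J x *v (y - x)) \<le> L0 * norm (y - x) ^ 2"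
proof -
  let ?S = "closed_segment x y"
  have sub: "?S \<subseteq> cball xs \<delta>" using x y by (simp add: closed_segment_subset convex_cball)
  have der: "((\<lambda>z. F z - J x *v z) has_derivative (\<lambda>v. J z *v v - J x *v v)) (at z within ?S)" for z
    by (rule has_derivative_at_withinI, intro has_derivative_diff F_deriv bounded_linear_imp_has_derivative
        matrix_vector_mul_bounded_linear)
  have ob: "onorm (\<lambda>v. J z *v v - J x *v v) \<le> L0 * norm (y - x)" if z: "z \<in> ?S" for z
  proof (rule onorm_le)
    fix v
    have "norm (J z *v v - J x *v v) = norm ((J z - J x) *v v)" by (simp add: matrix_vector_mult_diff_rdistrib)
    also have "\<dots> \<le> specnorm (J z - J x) * norm v" by (rule specnorm_bound)
    also have "\<dots> \<le> L0 * norm (z - x) * norm v"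
    proof (rule mult_right_mono)
      show "specnorm (J z - J x) \<le> L0 * norm (z - x)" using lip[of z x] sub z x by blast
    qed simp
    also have "\<dots> \<le> L0 * norm (y - x) * norm v"
    proof -
      show ?thesis using segment_bound1[OF z] L0nn
        by (intro mult_right_mono mult_left_mono) simp_all
    qed
    finally show "norm (J z *v v - J x *v v) \<le> L0 * norm (y - x) * norm v" .
  qed
  have "norm ((F y - J x *v y) - (F x - J x *v x)) \<le> L0 * norm (y - x) * norm (y - x)"
    by (rule differentiable_bound[OF convex_closed_segment der ob]) (simp_all add: ends_in_segment)
  moreover have "(F y - J x *v y) - (F x - J x *v x) = F y - F x - J x *v (y - x)"
    by (simp add: matrix_vector_mult_diff_distrib)
  ultimately show ?thesis by (simp add: power2_eq_square)
qed

lemma lip_bound: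
  fixes F :: "real^'n \<Rightarrow> real^'m" and J :: "real^'n \<Rightarrow> real^'n^'m"
  assumes F_deriv: "\<And>x. (F has_derivative (\<lambda>h. J x *v h)) (at x)"
    and KJ: "\<And>z v. z \<in> cball xs \<delta> \<Longrightarrow> norm (J z *v v) \<le> KJ * norm v"
    and x: "x \<in> cball xs \<delta>" and y: "y \<in> cball xs \<delta>"
  shows "norm (F y - F x) \<le> KJ * norm (y - x)"
proof -
  have der: "(F has_derivative (\<lambda>v. J z *v v)) (at z within cball xs \<delta>)" for z
    by (rule has_derivative_at_withinI, rule F_deriv)
  have ob: "onorm (\<lambda>v. J z *v v) \<le> KJ" if "z \<in> cball xs \<delta>" for z
    by (rule onorm_le) (use KJ that in blast)
  show ?thesis by (rule differentiable_bound[OF convex_cball der ob y x])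
qed
lemma nearest:
  fixes X :: "(real^'n) set"
  assumes "closed X" "xs \<in> X" "x \<in> cball xs \<rho>"
  shows "\<exists>xb\<in>X. infdist x X = norm (x - xb) \<and> xb \<in> cball xs (2*\<rho>) \<and> infdist x X \<le> \<rho>"
proof -
  obtain xb where xb: "xb \<in> X" "infdist x X = dist x xb"
    using infdist_attains_inf[OF assms(1)] assms(2) by blast
  have "infdist x X \<le> dist x xs" using infdist_le[OF assms(2)] .
  also have "\<dots> \<le> \<rho>" using assms(3) by (simp add: dist_commute)
  finally have t: "infdist x X \<le> \<rho>" .
  have "dist xs xb \<le> dist xs x + dist x xb" by (rule dist_triangle)
  also have "\<dots> \<le> 2 * \<rho>" using assms(3) xb(2) t by simp
  finally show ?thesis using xb t by (auto simp: dist_norm)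
qed

lemma g_bound:
  fixes F :: "real^'n \<Rightarrow> real^'m" and J :: "real^'n \<Rightarrow> real^'n^'m"
  assumes F_deriv: "\<And>x. (F has_derivative (\<lambda>h. J x *v h)) (at x)"
    and KJ: "\<And>z v. z \<in> cball xs \<delta> \<Longrightarrow> norm (J z *v v) \<le> KJ * norm v"
    and KJt: "\<And>z w. z \<in> cball xs \<delta> \<Longrightarrow> norm (transpose (J z) *v w) \<le> KJ * norm w"
    and KF: "\<And>z. z \<in> cball xs \<delta> \<Longrightarrow> norm (F z) \<le> KF"
    and lip: "\<And>x y. x \<in> cball xs \<delta> \<Longrightarrow> y \<in> cball xs \<delta> \<Longrightarrow> specnorm (J x - J y) \<le> L0 * norm (x - y)"
    and x: "x \<in> cball xs \<delta>" and xb: "xb \<in> cball xs \<delta>" and g0: "transpose (J xb) *v F xb = 0"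
  shows "norm (transpose (J x) *v F x) \<le> (KJ * KJ + L0 * KF) * norm (x - xb)"
proof -
  have eq: "transpose (J x) *v F x = transpose (J x) *v (F x - F xb) + transpose (J x - J xb) *v F xb"
    using g0 by (simp add: transpose_minus matrix_vector_mult_diff_distrib matrix_vector_mult_diff_rdistrib
        del: transpose_matrix_vector)
  have KJnn: "KJ \<ge> 0"
  proof -
    have "norm (J x *v axis undefined 1) \<le> KJ * norm (axis undefined (1::real) :: real^'n)" using KJ[OF x] .
    moreover have "norm (axis undefined (1::real) :: real^'n) = 1" by (simp add: norm_axis_1)
    moreover have "0 \<le> norm (J x *v axis undefined 1)" by simp
    ultimately show ?thesis by (metis mult.right_neutral order_trans)
  qed
  have 1: "norm (transpose (J x) *v (F x - F xb)) \<le> KJ * (KJ * norm (x - xb))"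
  proof -
    have "norm (transpose (J x) *v (F x - F xb)) \<le> KJ * norm (F x - F xb)" by (rule KJt[OF x])
    also have "\<dots> \<le> KJ * (KJ * norm (x - xb))"
      using lip_bound[OF F_deriv KJ xb x] KJnn by (intro mult_left_mono) auto
    finally show ?thesis .
  qed
  have 2: "norm (transpose (J x - J xb) *v F xb) \<le> L0 * norm (x - xb) * KF"
  proof -
    have "norm (transpose (J x - J xb) *v F xb) \<le> specnorm (J x - J xb) * norm (F xb)"
      by (rule specnorm_transpose_bound)
    also have "\<dots> \<le> L0 * norm (x - xb) * KF"
    proof (rule mult_mono)
      show "specnorm (J x - J xb) \<le> L0 * norm (x - xb)" by (rule lip[OF x xb])
      show "norm (F xb) \<le> KF" by (rule KF[OF xb])
      have "0 \<le> specnorm (J x - J xb)" unfolding specnorm_def by (rule onorm_pos_le) simp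
      then show "0 \<le> L0 * norm (x - xb)" using lip[OF x xb] by linarith
    qed simp
    finally show ?thesis .
  qed
  have "norm (transpose (J x) *v F x) \<le> norm (transpose (J x) *v (F x - F xb)) + norm (transpose (J x - J xb) *v F xb)"
    unfolding eq by (rule norm_triangle_ineq)
  also have "\<dots> \<le> KJ * (KJ * norm (x - xb)) + L0 * norm (x - xb) * KF" using 1 2 by linarith
  also have "\<dots> = (KJ * KJ + L0 * KF) * norm (x - xb)" by (simp add: algebra_simps)
  finally show ?thesis .
qed
lemma part_a:
  fixes F :: "real^'n \<Rightarrow> real^'m" and J :: "real^'n \<Rightarrow> real^'n^'m" and L :: "real^'n^'p"
  assumes F_deriv: "\<And>x. (F has_derivative (\<lambda>h. J x *v h)) (at x)"
    and KJ: "\<And>z v. z \<in> cball xs \<delta> \<Longrightarrow> norm (J z *v v) \<le> KJ * norm v"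
    and KJt: "\<And>z w. z \<in> cball xs \<delta> \<Longrightarrow> norm (transpose (J z) *v w) \<le> KJ * norm w"
    and KF: "\<And>z. z \<in> cball xs \<delta> \<Longrightarrow> norm (F z) \<le> KF"
    and lip: "\<And>x y. x \<in> cball xs \<delta> \<Longrightarrow> y \<in> cball xs \<delta> \<Longrightarrow> specnorm (J x - J y) \<le> L0 * norm (x - y)"
    and cL: "\<And>v. norm (L *v v) \<le> cL * norm v"
    and gam: "\<gamma> > 0"
    and A1: "\<And>x v. x \<in> cball xs \<delta> \<Longrightarrow> norm (J x *v v)^2 + norm (L *v v)^2 \<ge> \<gamma> * norm v ^ 2"
    and sig: "\<sigma> > 0" "\<And>x a. x \<in> cball xs \<rho> \<Longrightarrow> \<sigma> * norm (transpose (J x) *v a) \<le> norm (J x *v (transpose (J x) *v a))"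
    and rho: "2 * \<rho> \<le> \<delta>"
    and clX: "closed (Xstar F J)" and xsX: "xs \<in> Xstar F J"
    and x: "x \<in> cball xs \<rho>"
    and step: "lmmss_step F J L (norm (transpose (J x) *v F x)) x d y"
  shows "norm d \<le> (2 + cL^2/\<gamma>) / \<sigma>^2 * (KJ * KJ + L0 * KF) * infdist x (Xstar F J)"
    and "norm (transpose (J x) *v F x) \<le> (KJ * KJ + L0 * KF) * infdist x (Xstar F J)"
proof -
  obtain xb where xb: "xb \<in> Xstar F J" "infdist x (Xstar F J) = norm (x - xb)" "xb \<in> cball xs (2*\<rho>)"
    using nearest[OF clX xsX x] by blast
  have rpos: "\<rho> \<ge> 0" using x by (simp add: dist_norm) (meson norm_ge_zero order_trans)
  have xd: "x \<in> cball xs \<delta>" using x rho rpos by auto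
  have xbd: "xb \<in> cball xs \<delta>" using xb(3) rho by auto
  have g0: "transpose (J xb) *v F xb = 0" using xb(1) by (simp add: Xstar_def del: transpose_matrix_vector)
  have gb: "norm (transpose (J x) *v F x) \<le> (KJ * KJ + L0 * KF) * infdist x (Xstar F J)"
    using g_bound[OF F_deriv KJ KJt KF lip xd xbd g0] xb(2) by simp
  then show "norm (transpose (J x) *v F x) \<le> (KJ * KJ + L0 * KF) * infdist x (Xstar F J)" .
  define lam where "lam = norm (transpose (J x) *v F x)"
  have Cd: "(2 + cL^2/\<gamma>) / \<sigma>^2 \<ge> 0" using gam sig by (simp add: add_nonneg_nonneg)
  show "norm d \<le> (2 + cL^2/\<gamma>) / \<sigma>^2 * (KJ * KJ + L0 * KF) * infdist x (Xstar F J)"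
  proof (cases "lam = 0")
    case True
    then have "d = 0" using step unfolding lmmss_step_def lam_def by blast
    moreover have "0 \<le> (KJ * KJ + L0 * KF) * infdist x (Xstar F J)" using gb norm_ge_zero order_trans by blast
    ultimately show ?thesis using Cd mult_nonneg_nonneg[OF Cd] by (simp only: norm_zero mult.assoc)
  next
    case False
    then have lpos: "lam > 0" by (simp add: lam_def)
    have eq: "(transpose (J x) ** J x + lam *\<^sub>R (transpose L ** L)) *v d = - (transpose (J x) *v F x)"
      using step unfolding lmmss_step_def lam_def by blast
    have "norm d \<le> (2 + cL^2/\<gamma>) / \<sigma>^2 * norm (transpose (J x) *v F x)"
      by (rule step_bound[OF lpos gam cL A1[OF xd] sig(1) sig(2)[OF x] eq])
    also have "\<dots> \<le> (2 + cL^2/\<gamma>) / \<sigma>^2 * ((KJ * KJ + L0 * KF) * infdist x (Xstar F J))"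
      using gb Cd by (rule mult_left_mono)
    finally show ?thesis by (simp add: mult.assoc)
  qed
qed
lemma grp_aux: "(a::'a::ab_group_add) + b = - c \<Longrightarrow> a + c = - b"
  by (metis add.commute add_diff_cancel_left' diff_minus_eq_add minus_add_cancel minus_diff_eq)

lemma part_b:
  fixes F :: "real^'n \<Rightarrow> real^'m" and J :: "real^'n \<Rightarrow> real^'n^'m" and L :: "real^'n^'p"
  assumes F_deriv: "\<And>x. (F has_derivative (\<lambda>h. J x *v h)) (at x)"
    and KJ: "\<And>z v. z \<in> cball xs \<delta> \<Longrightarrow> norm (J z *v v) \<le> KJ * norm v"
    and KJt: "\<And>z w. z \<in> cball xs \<delta> \<Longrightarrow> norm (transpose (J z) *v w) \<le> KJ * norm w"
    and KF: "\<And>z. z \<in> cball xs \<delta> \<Longrightarrow> norm (F z) \<le> KF"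
    and lip: "\<And>x y. x \<in> cball xs \<delta> \<Longrightarrow> y \<in> cball xs \<delta> \<Longrightarrow> specnorm (J x - J y) \<le> L0 * norm (x - y)"
    and L0nn: "L0 \<ge> 0" and KJnn: "KJ \<ge> 0"
    and cL: "\<And>v. norm (L *v v) \<le> cL * norm v"
    and cLt: "\<And>w. norm (transpose L *v w) \<le> cL * norm w" and cLnn: "cL \<ge> 0"
    and A3: "\<omega> > 0" "\<And>x. x \<in> cball xs \<delta> \<Longrightarrow> \<omega> * infdist x (Xstar F J) \<le> norm (transpose (J x) *v F x)"
    and A4: "0 < r" "r \<le> 1" "C \<ge> 0"
      "\<And>x z. x \<in> cball xs \<delta> \<Longrightarrow> z \<in> Xstar F J \<inter> cball xs \<delta> \<Longrightarrow>
         norm (transpose (J x - J z) *v F z) \<le> C * norm (x - z) powr (1 + r)"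
    and rho: "2 * \<rho> \<le> \<delta>"
    and clX: "closed (Xstar F J)" and xsX: "xs \<in> Xstar F J"
    and x: "x \<in> cball xs \<rho>" and y: "y \<in> cball xs \<rho>"
    and step: "lmmss_step F J L (norm (transpose (J x) *v F x)) x d y"
    and c1: "c1 \<ge> 0" and dbound: "norm d \<le> c1 * infdist x (Xstar F J)"
    and Lg: "Lg \<ge> 0" and gbound: "norm (transpose (J x) *v F x) \<le> Lg * infdist x (Xstar F J)"
    and t1: "infdist x (Xstar F J) \<le> 1"
  shows "infdist y (Xstar F J) \<le>
     ((Lg*cL*cL*c1 + KJ*L0*c1^2 + L0*c1*KJ*(1+c1) + C*(1+c1) powr (1+r) + C) / \<omega> + 1)
       * infdist x (Xstar F J) powr (1 + r)"
proof -
  define X where "X = Xstar F J"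
  define t where "t = infdist x X"
  define K0 where "K0 = Lg*cL*cL*c1 + KJ*L0*c1^2 + L0*c1*KJ*(1+c1) + C*(1+c1) powr (1+r) + C"
  define lam where "lam = norm (transpose (J x) *v F x)"
  have K0nn: "K0 \<ge> 0" unfolding K0_def using Lg cLnn c1 KJnn L0nn A4 by simp
  have yx: "y = x + d" using step unfolding lmmss_step_def by blast
  have eq: "(transpose (J x) ** J x + lam *\<^sub>R (transpose L ** L)) *v d = - (transpose (J x) *v F x)"
    using step unfolding lmmss_step_def lam_def by blast
  have eq': "transpose (J x) *v (J x *v d) + lam *\<^sub>R (transpose L *v (L *v d)) = - (transpose (J x) *v F x)"
    using eq by (simp only: matrix_vector_mult_add_rdistrib scaleR_matrix_vector_assoc matrix_vector_mul_assoc)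
  obtain xb where xb: "xb \<in> X" "t = norm (x - xb)" "xb \<in> cball xs (2*\<rho>)"
    using nearest[OF clX xsX x] unfolding X_def t_def by blast
  have rpos: "\<rho> \<ge> 0" using x by (simp add: dist_norm) (meson norm_ge_zero order_trans)
  have xd: "x \<in> cball xs \<delta>" using x rho rpos by auto
  have yd: "y \<in> cball xs \<delta>" using y rho rpos by auto
  have xbd: "xb \<in> cball xs \<delta>" using xb(3) rho by auto
  have tnn: "t \<ge> 0" by (simp add: t_def infdist_nonneg)
  show ?thesis
  proof (cases "t = 0")
    case True
    then have "d = 0" using dbound by (simp add: t_def X_def)
    then have "y = x" using yx by simp
    moreover have "infdist x X = 0" using True by (simp add: t_def)
    ultimately show ?thesis by (simp add: X_def)
  next
    case False
    then have tpos: "t > 0" using tnn by simp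
    have dt: "norm d \<le> c1 * t" using dbound by (simp add: t_def X_def)
    have lamt: "lam \<le> Lg * t" using gbound by (simp add: t_def X_def lam_def)
    have ybt: "norm (y - xb) \<le> (1 + c1) * t"
    proof -
      have "norm (y - xb) \<le> norm (x - xb) + norm d"
        using yx norm_triangle_ineq[of "x - xb" d] by (simp add: algebra_simps)
      then show ?thesis using dt xb(2) by (simp add: algebra_simps)
    qed
    define R1 where "R1 = F y - F x - J x *v d"
    have R1b: "norm R1 \<le> L0 * norm d ^ 2"
      using taylor_bound[OF F_deriv lip L0nn xd yd] yx by (simp add: R1_def)
    have iden: "transpose (J y) *v F y =
        (transpose (J x) *v (J x *v d) + transpose (J x) *v F x) + transpose (J x) *v R1
        + transpose (J y - J xb) *v F xb - transpose (J x - J xb) *v F xb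
        + transpose (J y - J x) *v (F y - F xb)"
      by (simp add: R1_def transpose_minus matrix_vector_mult_diff_distrib matrix_vector_mult_diff_rdistrib
          matrix_vector_right_distrib algebra_simps del: transpose_matrix_vector)
    have T1: "norm (transpose (J x) *v (J x *v d) + transpose (J x) *v F x) \<le> Lg*cL*cL*c1 * t^2"
    proof -
      have "transpose (J x) *v (J x *v d) + transpose (J x) *v F x = - (lam *\<^sub>R (transpose L *v (L *v d)))"
        using eq' by (rule grp_aux)
      then have "norm (transpose (J x) *v (J x *v d) + transpose (J x) *v F x) = lam * norm (transpose L *v (L *v d))"
        by (simp add: lam_def del: transpose_matrix_vector)
      also have "\<dots> \<le> (Lg * t) * (cL * cL * c1 * t)"
      proof (rule mult_mono)
        have "norm (transpose L *v (L *v d)) \<le> cL * norm (L *v d)" by (rule cLt)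
        also have "\<dots> \<le> cL * (cL * norm d)" using cL cLnn by (intro mult_left_mono) auto
        also have "\<dots> \<le> cL * (cL * (c1 * t))" using dt cLnn by (intro mult_left_mono) auto
        finally show "norm (transpose L *v (L *v d)) \<le> cL * cL * c1 * t" by (simp add: mult.assoc)
      qed (use lamt Lg tnn in \<open>auto simp: lam_def\<close>)
      finally show ?thesis by (simp add: power2_eq_square algebra_simps)
    qed
    define tp where "tp = t powr (1 + r)"
    have tpnn: "tp \<ge> 0" by (simp add: tp_def)
    have t2: "t^2 \<le> tp"
    proof -
      have "t^2 = t powr (real 2)" using tpos by (simp add: powr_realpow)
      also have "\<dots> \<le> t powr (1 + r)" using A4(2) tnn t1 by (intro powr_mono') (auto simp: t_def X_def)
      finally show ?thesis by (simp add: tp_def)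
    qed
    have T2: "norm (transpose (J x) *v R1) \<le> KJ*L0*c1^2 * t^2"
    proof -
      have "norm (transpose (J x) *v R1) \<le> KJ * norm R1" by (rule KJt[OF xd])
      also have "\<dots> \<le> KJ * (L0 * (c1 * t)^2)"
      proof (intro mult_left_mono KJnn)
        have "norm d ^ 2 \<le> (c1 * t)^2" using dt by (intro power_mono) auto
        then show "norm R1 \<le> L0 * (c1 * t)^2" using R1b L0nn
          by (meson mult_left_mono order_trans)
      qed
      finally show ?thesis by (simp add: power_mult_distrib algebra_simps)
    qed
    have T3: "norm (transpose (J y - J xb) *v F xb) \<le> C*(1+c1) powr (1+r) * tp"
    proof -
      have "norm (transpose (J y - J xb) *v F xb) \<le> C * norm (y - xb) powr (1 + r)"
        using A4(4)[OF yd] xb(1) xbd by (simp add: X_def del: transpose_matrix_vector)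
      also have "\<dots> \<le> C * ((1 + c1) * t) powr (1 + r)"
        using ybt A4 by (intro mult_left_mono powr_mono2) auto
      also have "\<dots> = C*(1+c1) powr (1+r) * tp" by (simp add: tp_def powr_mult)
      finally show ?thesis .
    qed
    have T4: "norm (transpose (J x - J xb) *v F xb) \<le> C * tp"
      using A4(4)[OF xd] xb(1,2) xbd by (simp add: X_def tp_def del: transpose_matrix_vector)
    have T5: "norm (transpose (J y - J x) *v (F y - F xb)) \<le> L0*c1*KJ*(1+c1) * t^2"
    proof -
      have "norm (transpose (J y - J x) *v (F y - F xb)) \<le> specnorm (J y - J x) * norm (F y - F xb)"
        by (rule specnorm_transpose_bound)
      also have "\<dots> \<le> (L0 * (c1 * t)) * (KJ * ((1 + c1) * t))"
      proof (rule mult_mono)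
        have "specnorm (J y - J x) \<le> L0 * norm (y - x)" by (rule lip[OF yd xd])
        also have "\<dots> \<le> L0 * (c1 * t)" using yx dt L0nn by (intro mult_left_mono) auto
        finally show "specnorm (J y - J x) \<le> L0 * (c1 * t)" .
        have "norm (F y - F xb) \<le> KJ * norm (y - xb)" by (rule lip_bound[OF F_deriv KJ xbd yd])
        also have "\<dots> \<le> KJ * ((1 + c1) * t)" using ybt KJnn by (intro mult_left_mono) auto
        finally show "norm (F y - F xb) \<le> KJ * ((1 + c1) * t)" .
      qed (use L0nn c1 tnn in auto)
      finally show ?thesis by (simp add: power2_eq_square algebra_simps)
    qed
    have "norm (transpose (J y) *v F y) \<le>
        Lg*cL*cL*c1 * t^2 + KJ*L0*c1^2 * t^2 + C*(1+c1) powr (1+r) * tp + C * tp + L0*c1*KJ*(1+c1) * t^2"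
    proof -
      let ?a = "transpose (J x) *v (J x *v d) + transpose (J x) *v F x"
      let ?b = "transpose (J x) *v R1"
      let ?c = "transpose (J y - J xb) *v F xb"
      let ?d = "transpose (J x - J xb) *v F xb"
      let ?e = "transpose (J y - J x) *v (F y - F xb)"
      have "norm (?a + ?b + ?c - ?d + ?e) \<le> norm ?a + norm ?b + norm ?c + norm ?d + norm ?e"
        by (smt (verit) norm_triangle_ineq norm_triangle_ineq4)
      then show ?thesis unfolding iden using T1 T2 T3 T4 T5 by linarith
    qed
    also have "\<dots> \<le> K0 * tp"
    proof -
      have "Lg*cL*cL*c1 * t^2 \<le> Lg*cL*cL*c1 * tp" using t2 Lg cLnn c1 by (intro mult_left_mono) auto
      moreover have "KJ*L0*c1^2 * t^2 \<le> KJ*L0*c1^2 * tp" using t2 KJnn L0nn by (intro mult_left_mono) auto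
      moreover have "L0*c1*KJ*(1+c1) * t^2 \<le> L0*c1*KJ*(1+c1) * tp" using t2 KJnn L0nn c1 by (intro mult_left_mono) auto
      ultimately show ?thesis unfolding K0_def by (simp add: algebra_simps)
    qed
    finally have gy: "norm (transpose (J y) *v F y) \<le> K0 * tp" .
    have "\<omega> * infdist y X \<le> K0 * tp" using A3(2)[OF yd] gy by (simp add: X_def del: transpose_matrix_vector)
    then have "infdist y X \<le> K0 / \<omega> * tp" using A3(1) by (simp add: field_simps)
    also have "\<dots> \<le> (K0 / \<omega> + 1) * tp" using tpnn by (simp add: algebra_simps)
    finally show ?thesis by (simp add: X_def K0_def tp_def t_def)
  qed
qed
lemma halving:
  fixes K t r :: real
  assumes K: "K > 0" and r: "r > 0" and t: "0 \<le> t" "t \<le> (1/(2*K)) powr (1/r)"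
  shows "K * t powr (1 + r) \<le> t / 2"
proof (cases "t = 0")
  case True then show ?thesis by simp
next
  case False
  then have tp: "t > 0" using t by simp
  have "t powr r \<le> ((1/(2*K)) powr (1/r)) powr r" using t r by (intro powr_mono2) auto
  also have "\<dots> = 1/(2*K)" using r K by (simp add: powr_powr)
  finally have a: "t powr r \<le> 1/(2*K)" .
  have "K * t powr (1 + r) = K * t * t powr r" using tp by (simp add: powr_add)
  also have "\<dots> \<le> K * t * (1/(2*K))" using a K tp by (intro mult_left_mono) auto
  also have "\<dots> = t / 2" using K by simp
  finally show ?thesis .
qed
theorem mainTheorem7:
  fixes F :: "real^'n \<Rightarrow> real^'m"
    and J :: "real^'n \<Rightarrow> real^'n^'m"
    and J2 :: "real^'n \<Rightarrow> ((real^'n) \<Rightarrow>\<^sub>L (real^'n^'m))"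
    and L :: "real^'n^'p"
    and xs :: "real^'n"
    and \<gamma> \<delta> L0 \<omega> r C :: real
  assumes dims: "CARD('n) \<le> CARD('m)"
    and F_deriv: "\<And>x. (F has_derivative (\<lambda>h. J x *v h)) (at x)"
    and J_deriv: "\<And>x. (J has_derivative blinfun_apply (J2 x)) (at x)"
    and J2_cont: "continuous_on UNIV J2"
    and L_rank: "rank L = CARD('p)"
    and xs_in: "xs \<in> Xstar F J"
    and A1: "\<gamma> > 0"
      "\<And>x v. x \<in> cball xs \<delta> \<Longrightarrow> norm (J x *v v)^2 + norm (L *v v)^2 \<ge> \<gamma> * norm v ^ 2"
    and A2: "0 < \<delta>" "\<delta> < 1" "L0 > 0"
      "\<And>x y. x \<in> cball xs \<delta> \<Longrightarrow> y \<in> cball xs \<delta> \<Longrightarrow> specnorm (J x - J y) \<le> L0 * norm (x - y)"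
    and A3: "\<omega> > 0"
      "\<And>x. x \<in> cball xs \<delta> \<Longrightarrow> \<omega> * infdist x (Xstar F J) \<le> norm (transpose (J x) *v F x)"
    and A4: "0 < r" "r \<le> 1" "C \<ge> 0"
      "\<And>x z. x \<in> cball xs \<delta> \<Longrightarrow> z \<in> Xstar F J \<inter> cball xs \<delta> \<Longrightarrow>
         norm (transpose (J x - J z) *v F z) \<le> C * norm (x - z) powr (1 + r)"
    and rank_const: "\<And>x. x \<in> cball xs \<delta> \<Longrightarrow> rank (J x) = rank (J xs)"
    and rank_pos: "rank (J xs) \<ge> 1"
  shows "\<exists>\<epsilon>>0. \<exists>K. \<forall>(x :: nat \<Rightarrow> real^'n) (d :: nat \<Rightarrow> real^'n).
           (x 0 \<in> cball xs \<epsilon> \<and>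
            (\<forall>k. lmmss_step F J L (norm (transpose (J (x k)) *v F (x k))) (x k) (d k) (x (Suc k))))
           \<longrightarrow> ((\<lambda>k. infdist (x k) (Xstar F J)) \<longlonglongrightarrow> 0)
             \<and> (\<forall>k. infdist (x (Suc k)) (Xstar F J) \<le> K * infdist (x k) (Xstar F J) powr (1 + r))
             \<and> (\<exists>z \<in> Xstar F J \<inter> cball xs (\<delta> / 2). x \<longlonglongrightarrow> z)"
proof -
  let ?X = "Xstar F J"
  have Fc: "continuous_on UNIV F"
    using F_deriv has_derivative_continuous continuous_at_imp_continuous_on by blast
  have Jc: "continuous_on UNIV J"
    using J_deriv has_derivative_continuous continuous_at_imp_continuous_on by blast
  have clX: "closed ?X" by (rule Xstar_closed[OF Fc Jc])
  have xsB: "xs \<in> cball xs \<delta>" using A2(1) by simp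
  have L0nn: "L0 \<ge> 0" using A2(3) by simp
  have lip1: "\<And>x. x \<in> cball xs \<delta> \<Longrightarrow> specnorm (J x - J xs) \<le> L0 * norm (x - xs)"
    using A2(4) xsB by blast
  obtain \<rho>1 \<sigma> where r1: "\<rho>1 > 0" "\<rho>1 \<le> \<delta>" and sig: "\<sigma> > 0"
    "\<And>x a. x \<in> cball xs \<rho>1 \<Longrightarrow> \<sigma> * norm (transpose (J x) *v a) \<le> norm (J x *v (transpose (J x) *v a))"
    using rank_part[OF A2(3) A2(1) lip1 rank_const] by blast
  have sn0: "\<And>A::real^'n^'m. specnorm A \<ge> 0" unfolding specnorm_def by (rule onorm_pos_le) simp
  define KJ where "KJ = specnorm (J xs) + L0 * \<delta>"
  have KJnn: "KJ \<ge> 0" unfolding KJ_def using sn0[of "J xs"] L0nn A2(1) by simp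
  have KJ: "norm (J z *v v) \<le> KJ * norm v" if z: "z \<in> cball xs \<delta>" for z v
  proof -
    have "J z *v v = J xs *v v + (J z - J xs) *v v" by (simp add: matrix_vector_mult_diff_rdistrib)
    then have "norm (J z *v v) \<le> norm (J xs *v v) + norm ((J z - J xs) *v v)" by (metis norm_triangle_ineq)
    also have "\<dots> \<le> specnorm (J xs) * norm v + specnorm (J z - J xs) * norm v"
      by (intro add_mono specnorm_bound)
    also have "\<dots> \<le> specnorm (J xs) * norm v + L0 * \<delta> * norm v"
    proof -
      have "specnorm (J z - J xs) \<le> L0 * \<delta>"
        using lip1[OF z] z L0nn by (smt (verit, ccfv_SIG) dist_norm mem_cball mult_left_mono norm_minus_commute)
      then show ?thesis by (simp add: mult_right_mono)
    qed
    finally show ?thesis by (simp add: KJ_def algebra_simps)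
  qed
  have KJt: "norm (transpose (J z) *v w) \<le> KJ * norm w" if z: "z \<in> cball xs \<delta>" for z w
  proof -
    have "transpose (J z) *v w = transpose (J xs) *v w + transpose (J z - J xs) *v w"
      by (simp add: transpose_minus matrix_vector_mult_diff_rdistrib del: transpose_matrix_vector)
    then have "norm (transpose (J z) *v w) \<le> norm (transpose (J xs) *v w) + norm (transpose (J z - J xs) *v w)"
      by (metis norm_triangle_ineq)
    also have "\<dots> \<le> specnorm (J xs) * norm w + specnorm (J z - J xs) * norm w"
      by (intro add_mono specnorm_transpose_bound)
    also have "\<dots> \<le> specnorm (J xs) * norm w + L0 * \<delta> * norm w"
    proof -
      have "specnorm (J z - J xs) \<le> L0 * \<delta>"
        using lip1[OF z] z L0nn by (smt (verit, ccfv_SIG) dist_norm mem_cball mult_left_mono norm_minus_commute)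
      then show ?thesis by (simp add: mult_right_mono)
    qed
    finally show ?thesis by (simp add: KJ_def algebra_simps)
  qed
  define KF where "KF = norm (F xs) + KJ * \<delta>"
  have KF: "norm (F z) \<le> KF" if z: "z \<in> cball xs \<delta>" for z
  proof -
    have "norm (F z - F xs) \<le> KJ * norm (z - xs)" by (rule lip_bound[OF F_deriv KJ xsB z])
    also have "\<dots> \<le> KJ * \<delta>" using z KJnn by (intro mult_left_mono) (auto simp: dist_norm norm_minus_commute)
    finally show ?thesis unfolding KF_def by (smt (verit) norm_triangle_ineq2)
  qed
  have KFnn: "KF \<ge> 0" unfolding KF_def using KJnn A2(1) by simp
  define cL where "cL = specnorm L"
  have cLnn: "cL \<ge> 0" unfolding cL_def specnorm_def by (rule onorm_pos_le) simp
  have cL: "\<And>v. norm (L *v v) \<le> cL * norm v" unfolding cL_def by (rule specnorm_bound)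
  have cLt: "\<And>w. norm (transpose L *v w) \<le> cL * norm w" unfolding cL_def by (rule specnorm_transpose_bound)
  define \<rho> where "\<rho> = min \<rho>1 (\<delta>/4)"
  have rpos: "\<rho> > 0" using r1 A2(1) by (simp add: \<rho>_def)
  have rho2: "2 * \<rho> \<le> \<delta>" using A2(1) by (simp add: \<rho>_def)
  have rhod2: "\<rho> \<le> \<delta>/2" using A2(1) by (simp add: \<rho>_def)
  have sig': "\<And>x a. x \<in> cball xs \<rho> \<Longrightarrow> \<sigma> * norm (transpose (J x) *v a) \<le> norm (J x *v (transpose (J x) *v a))"
    using sig(2) by (simp add: \<rho>_def)
  define Lg where "Lg = KJ * KJ + L0 * KF"
  have Lgnn: "Lg \<ge> 0" unfolding Lg_def using KJnn L0nn KFnn by simp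
  define c1 where "c1 = (2 + cL^2/\<gamma>) / \<sigma>^2 * Lg"
  have c1nn: "c1 \<ge> 0" unfolding c1_def using A1(1) sig(1) Lgnn by (simp add: add_nonneg_nonneg)
  define K where "K = (Lg*cL*cL*c1 + KJ*L0*c1^2 + L0*c1*KJ*(1+c1) + C*(1+c1) powr (1+r) + C) / \<omega> + 1"
  have Kpos: "K > 0"
  proof -
    have "Lg*cL*cL*c1 + KJ*L0*c1^2 + L0*c1*KJ*(1+c1) + C*(1+c1) powr (1+r) + C \<ge> 0"
      using Lgnn cLnn c1nn KJnn L0nn A4(3) by simp
    then show ?thesis unfolding K_def using A3(1) by (smt (verit) divide_nonneg_pos)
  qed
  define \<tau> where "\<tau> = min 1 ((1/(2*K)) powr (1/r))"
  have taupos: "\<tau> > 0" using Kpos by (simp add: \<tau>_def)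
  define \<epsilon> where "\<epsilon> = min (\<rho> / (1 + 2*c1)) \<tau>"
  have epos: "\<epsilon> > 0" using rpos c1nn taupos by (simp add: \<epsilon>_def)
  have erho: "\<epsilon> * (1 + 2*c1) \<le> \<rho>"
  proof -
    have "\<epsilon> \<le> \<rho> / (1 + 2*c1)" by (simp add: \<epsilon>_def)
    then show ?thesis using c1nn by (simp add: field_simps)
  qed
  have etau: "\<epsilon> \<le> \<tau>" by (simp add: \<epsilon>_def)
  have main: "((\<lambda>k. infdist (x k) ?X) \<longlonglongrightarrow> 0)
             \<and> (\<forall>k. infdist (x (Suc k)) ?X \<le> K * infdist (x k) ?X powr (1 + r))
             \<and> (\<exists>z \<in> ?X \<inter> cball xs (\<delta> / 2). x \<longlonglongrightarrow> z)"
    if x0: "x 0 \<in> cball xs \<epsilon>"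
      and steps: "\<forall>k. lmmss_step F J L (norm (transpose (J (x k)) *v F (x k))) (x k) (d k) (x (Suc k))"
    for x d
  proof -
    define t where "t k = infdist (x k) ?X" for k
    have tnn: "\<And>k. t k \<ge> 0" by (simp add: t_def infdist_nonneg)
    have t0e: "t 0 \<le> \<epsilon>"
    proof -
      have "t 0 \<le> dist (x 0) xs" unfolding t_def by (rule infdist_le[OF xs_in])
      then show ?thesis using x0 by (simp add: dist_commute)
    qed
    have inball: "x k \<in> cball xs \<rho>" if h: "norm (x k - x 0) \<le> 2*c1*t 0" for k
    proof -
      have "dist xs (x k) \<le> dist xs (x 0) + dist (x 0) (x k)" by (rule dist_triangle)
      also have "\<dots> \<le> \<epsilon> + 2*c1*\<epsilon>"
      proof -
        have "dist (x 0) (x k) \<le> 2*c1*\<epsilon>"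
          using h t0e c1nn by (smt (verit) dist_norm mult_left_mono norm_minus_commute)
        then show ?thesis using x0 by simp
      qed
      also have "\<dots> \<le> \<rho>" using erho by (simp add: algebra_simps)
      finally show ?thesis by simp
    qed
    have inv: "t k \<le> t 0 * (1/2)^k \<and> norm (x k - x 0) \<le> 2*c1*t 0*(1 - (1/2)^k)" for k
    proof (induction k)
      case 0 then show ?case by simp
    next
      case (Suc k)
      have hk: "norm (x k - x 0) \<le> 2*c1*t 0"
      proof -
        have "2*c1*t 0*(1 - (1/2)^k) \<le> 2*c1*t 0" using c1nn tnn[of 0] by (simp add: mult_left_le)
        then show ?thesis using Suc.IH by linarith
      qed
      have xk: "x k \<in> cball xs \<rho>" by (rule inball[OF hk])
      have stk: "lmmss_step F J L (norm (transpose (J (x k)) *v F (x k))) (x k) (d k) (x (Suc k))"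
        using steps by blast
      note pa = part_a[OF F_deriv KJ KJt KF A2(4) cL A1(1) A1(2) sig(1) sig' rho2 clX xs_in xk stk]
      have db: "norm (d k) \<le> c1 * t k" using pa(1) by (simp add: c1_def Lg_def t_def)
      have gb: "norm (transpose (J (x k)) *v F (x k)) \<le> Lg * t k" using pa(2) by (simp add: Lg_def t_def)
      have xs: "x (Suc k) = x k + d k" using stk unfolding lmmss_step_def by blast
      have d2: "norm (d k) \<le> c1 * t 0 * (1/2)^k"
        using db Suc.IH c1nn by (smt (verit) mult.assoc mult_left_mono)
      have nx: "norm (x (Suc k) - x 0) \<le> 2*c1*t 0*(1 - (1/2)^Suc k)"
      proof -
        have "norm (x (Suc k) - x 0) \<le> norm (x k - x 0) + norm (d k)"
          using xs norm_triangle_ineq[of "x k - x 0" "d k"] by (simp add: algebra_simps)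
        also have "\<dots> \<le> 2*c1*t 0*(1 - (1/2)^k) + c1 * t 0 * (1/2)^k" using Suc.IH d2 by linarith
        also have "\<dots> = 2*c1*t 0*(1 - (1/2)^Suc k)" by (simp add: algebra_simps)
        finally show ?thesis .
      qed
      have hk1: "norm (x (Suc k) - x 0) \<le> 2*c1*t 0"
      proof -
        have "2*c1*t 0*(1 - (1/2)^Suc k) \<le> 2*c1*t 0" using c1nn tnn[of 0] by (simp add: mult_left_le)
        then show ?thesis using nx by linarith
      qed
      have xk1: "x (Suc k) \<in> cball xs \<rho>" by (rule inball[OF hk1])
      have tk_le: "t k \<le> t 0"
      proof -
        have "t 0 * (1/2)^k \<le> t 0 * 1" using tnn[of 0] by (intro mult_left_mono) (auto simp: power_le_one)
        then show ?thesis using Suc.IH by linarith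
      qed
      have tk1: "t k \<le> 1" using tk_le t0e etau by (simp add: \<tau>_def)
      have "t (Suc k) \<le> K * t k powr (1 + r)"
        using part_b[OF F_deriv KJ KJt KF A2(4) L0nn KJnn cL cLt cLnn A3 A4 rho2 clX xs_in xk xk1 stk
            c1nn db[unfolded t_def] Lgnn gb[unfolded t_def] tk1[unfolded t_def]]
        by (simp add: t_def K_def)
      also have "\<dots> \<le> t k / 2"
      proof (rule halving[OF Kpos A4(1) tnn])
        show "t k \<le> (1/(2*K)) powr (1/r)" using tk_le t0e etau by (simp add: \<tau>_def)
      qed
      also have "\<dots> \<le> t 0 * (1/2)^Suc k" using Suc.IH by simp
      finally show ?case using nx by simp
    qed
    have facts: "x k \<in> cball xs \<rho> \<and> norm (d k) \<le> c1 * t 0 * (1/2)^k \<and> t (Suc k) \<le> K * t k powr (1 + r)" for k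
    proof -
      have hk: "norm (x j - x 0) \<le> 2*c1*t 0" for j
      proof -
        have "2*c1*t 0*(1 - (1/2)^j) \<le> 2*c1*t 0" using c1nn tnn[of 0] by (simp add: mult_left_le)
        then show ?thesis using inv[of j] by linarith
      qed
      have xk: "x k \<in> cball xs \<rho>" by (rule inball[OF hk])
      have xk1: "x (Suc k) \<in> cball xs \<rho>" by (rule inball[OF hk])
      have stk: "lmmss_step F J L (norm (transpose (J (x k)) *v F (x k))) (x k) (d k) (x (Suc k))"
        using steps by blast
      note pa = part_a[OF F_deriv KJ KJt KF A2(4) cL A1(1) A1(2) sig(1) sig' rho2 clX xs_in xk stk]
      have db: "norm (d k) \<le> c1 * t k" using pa(1) by (simp add: c1_def Lg_def t_def)
      have gb: "norm (transpose (J (x k)) *v F (x k)) \<le> Lg * t k" using pa(2) by (simp add: Lg_def t_def)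
      have d2: "norm (d k) \<le> c1 * t 0 * (1/2)^k"
        using db inv[of k] c1nn by (smt (verit) mult.assoc mult_left_mono)
      have tk_le: "t k \<le> t 0"
      proof -
        have "t 0 * (1/2)^k \<le> t 0 * 1" using tnn[of 0] by (intro mult_left_mono) (auto simp: power_le_one)
        then show ?thesis using inv[of k] by linarith
      qed
      have tk1: "t k \<le> 1" using tk_le t0e etau by (simp add: \<tau>_def)
      have "t (Suc k) \<le> K * t k powr (1 + r)"
        using part_b[OF F_deriv KJ KJt KF A2(4) L0nn KJnn cL cLt cLnn A3 A4 rho2 clX xs_in xk xk1 stk
            c1nn db[unfolded t_def] Lgnn gb[unfolded t_def] tk1[unfolded t_def]]
        by (simp add: t_def K_def)
      then show ?thesis using xk d2 by simp
    qed
    have lim0: "t \<longlonglongrightarrow> 0"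
    proof (rule Lim_null_comparison)
      show "\<forall>\<^sub>F k in sequentially. norm (t k) \<le> t 0 * (1/2)^k"
      proof (intro always_eventually allI)
        fix k show "norm (t k) \<le> t 0 * (1/2)^k" using inv[of k] tnn[of k] by simp
      qed
      show "(\<lambda>k. t 0 * (1/2::real)^k) \<longlonglongrightarrow> 0"
        by (intro tendsto_mult_right_zero LIMSEQ_power_zero) simp
    qed
    have sumd: "summable d"
    proof (rule summable_comparison_test)
      show "\<exists>N. \<forall>n\<ge>N. norm (d n) \<le> c1 * t 0 * (1/2)^n" using facts by meson
      show "summable (\<lambda>n. c1 * t 0 * (1/2::real)^n)" by (intro summable_mult summable_geometric) simp
    qed
    have xsum: "x k = x 0 + (\<Sum>i<k. d i)" for k
    proof (induction k)
      case 0 then show ?case by simp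
    next
      case (Suc k)
      have "x (Suc k) = x k + d k" using steps unfolding lmmss_step_def by blast
      then show ?case using Suc.IH by (simp add: algebra_simps)
    qed
    define z where "z = x 0 + suminf d"
    have xz: "x \<longlonglongrightarrow> z"
    proof -
      have "(\<lambda>k. x 0 + (\<Sum>i<k. d i)) \<longlonglongrightarrow> x 0 + suminf d"
        by (intro tendsto_add tendsto_const summable_LIMSEQ sumd)
      moreover have "x = (\<lambda>k. x 0 + (\<Sum>i<k. d i))" by (rule ext) (rule xsum)
      ultimately show ?thesis unfolding z_def by simp
    qed
    have zball: "z \<in> cball xs \<rho>"
    proof (rule Lim_in_closed_set[OF closed_cball _ _ xz])
      show "\<forall>\<^sub>F k in sequentially. x k \<in> cball xs \<rho>"
        by (intro always_eventually allI) (use facts in meson)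
    qed simp
    have "(\<lambda>k. infdist (x k) ?X) \<longlonglongrightarrow> infdist z ?X" by (intro tendsto_infdist xz)
    then have "infdist z ?X = 0" using lim0 LIMSEQ_unique unfolding t_def by blast
    then have zX: "z \<in> ?X" using in_closed_iff_infdist_zero[OF clX] xs_in by blast
    have "z \<in> cball xs (\<delta>/2)" using zball rhod2 by auto
    then have "\<exists>z \<in> ?X \<inter> cball xs (\<delta> / 2). x \<longlonglongrightarrow> z" using zX xz by blast
    moreover have "\<forall>k. infdist (x (Suc k)) ?X \<le> K * infdist (x k) ?X powr (1 + r)"
      using facts unfolding t_def by blast
    ultimately show ?thesis using lim0 unfolding t_def by blast
  qed
  show ?thesis using epos main by blast
qed

end
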